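(* A preordered group $(G,P_G)$ is a commutative object of the (unital) category $\mathsf{PreOrdGrp}$ if and only if $G$ is abelian. Consequently, the category $\mathsf{ComMon}(\mathsf{PreOrdGrp})$ of internal commutative monoids in $\mathsf{PreOrdGrp}$ coincides with $\mathsf{PreOrdAb}$.
   Context: A preordered group is a pair $(G,P_G)$ with $G$ an additively written group and $P_G\subseteq G$ a submonoid closed under conjugation; morphisms are group homomorphisms $f$ with $f(P_G)\subseteq P_H$. This is $\mathsf{PreOrdGrp}$; products are $(G\times H,P_G\times P_H)$. $\mathsf{PreOrdAb}$ is the full subcategory with $G$ abelian. $\mathsf{PreOrdGrp}$ is a unital category (pointed, finitely complete, and for all $X,Y$ the pair $l_X=\langle 1_X,0\rangle\colon X\to X\times Y$, $r_Y=\langle 0,1_Y\rangle\colon Y\to X\times Y$ is jointly strongly epimorphic). In a unital category an object $X$ is commutative if there is a morphism $\phi\colon X\times X\to X$ with $\phi\circ l_X=1_X=\phi\circ r_X$; in a unital category, the commutative objects form exactly the full subcategory of internal commutative monoids. *)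

theory Defs
  imports "HOL-Algebra.Algebra"
begin

text \<open>Preordered groups (G, P): G a group (written multiplicatively in HOL-Algebra,
  additively in the paper), P a submonoid of G closed under conjugation.\<close>

definition preordered_group :: "('a, 'b) monoid_scheme \<Rightarrow> 'a set \<Rightarrow> bool" where
  "preordered_group G P \<longleftrightarrow>
     group G \<and> P \<subseteq> carrier G \<and> \<one>\<^bsub>G\<^esub> \<in> P \<and>
     (\<forall>p\<in>P. \<forall>q\<in>P. p \<otimes>\<^bsub>G\<^esub> q \<in> P) \<and>
     (\<forall>g\<in>carrier G. \<forall>p\<in>P. g \<otimes>\<^bsub>G\<^esub> p \<otimes>\<^bsub>G\<^esub> inv\<^bsub>G\<^esub> g \<in> P)"

definition preord_hom ::
  "('a, 'b) monoid_scheme \<Rightarrow> 'a set \<Rightarrow> ('c, 'd) monoid_scheme \<Rightarrow> 'c set \<Rightarrow> ('a \<Rightarrow> 'c) set" where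
  "preord_hom G P H Q = {f. f \<in> hom G H \<and> f ` P \<subseteq> Q}"

text \<open>Commutative object in the unital category PreOrdGrp: there is a morphism
  \<phi> : X \<times> X \<rightarrow> X (product (G \<times>\<times> G, P \<times> P)) with \<phi> \<circ> l_X = 1_X = \<phi> \<circ> r_X,
  where l_X = <1_X, 0>, r_X = <0, 1_X>.  Equalities of morphisms are equalities on the carrier.\<close>

definition commutative_object :: "('a, 'b) monoid_scheme \<Rightarrow> 'a set \<Rightarrow> bool" where
  "commutative_object G P \<longleftrightarrow>
     (\<exists>\<phi> \<in> preord_hom (G \<times>\<times> G) (P \<times> P) G P.
        \<forall>x\<in>carrier G. \<phi> (x, \<one>\<^bsub>G\<^esub>) = x \<and> \<phi> (\<one>\<^bsub>G\<^esub>, x) = x)"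

definition unit_grp :: "unit monoid" where
  "unit_grp = \<lparr>carrier = {()}, monoid.mult = (\<lambda>_ _. ()), one = ()\<rparr>"

definition internal_comm_monoid ::
  "('a, 'b) monoid_scheme \<Rightarrow> 'a set \<Rightarrow> ('a \<times> 'a \<Rightarrow> 'a) \<Rightarrow> (unit \<Rightarrow> 'a) \<Rightarrow> bool" where
  "internal_comm_monoid G P m e \<longleftrightarrow>
     m \<in> preord_hom (G \<times>\<times> G) (P \<times> P) G P \<and>
     e \<in> preord_hom unit_grp {()} G P \<and>
     (\<forall>x\<in>carrier G. m (e (), x) = x \<and> m (x, e ()) = x) \<and>
     (\<forall>x\<in>carrier G. \<forall>y\<in>carrier G. \<forall>z\<in>carrier G. m (m (x, y), z) = m (x, m (y, z))) \<and>
     (\<forall>x\<in>carrier G. \<forall>y\<in>carrier G. m (x, y) = m (y, x))"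

definition in_ComMon :: "('a, 'b) monoid_scheme \<Rightarrow> 'a set \<Rightarrow> bool" where
  "in_ComMon G P \<longleftrightarrow> (\<exists>m e. internal_comm_monoid G P m e)"

end

theory Submission
  imports Defs
begin

lemma key:
  fixes G (structure)
  assumes g: "group G" and h: "\<phi> \<in> hom (G \<times>\<times> G) G"
    and u: "\<forall>x\<in>carrier G. \<phi> (x, \<one>\<^bsub>G\<^esub>) = x \<and> \<phi> (\<one>\<^bsub>G\<^esub>, x) = x"
  shows "comm_group G"
proof -
  interpret group G by (rule g)
  have "x \<otimes> y = y \<otimes> x" if x: "x \<in> carrier G" and y: "y \<in> carrier G" for x y
  proof -
    have "\<phi> ((x, \<one>) \<otimes>\<^bsub>G \<times>\<times> G\<^esub> (\<one>, y)) = \<phi> (x, \<one>) \<otimes> \<phi> (\<one>, y)"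
      using h x y by (intro hom_mult) auto
    hence 1: "\<phi> (x, y) = x \<otimes> y" using x y u by simp
    have "\<phi> ((\<one>, y) \<otimes>\<^bsub>G \<times>\<times> G\<^esub> (x, \<one>)) = \<phi> (\<one>, y) \<otimes> \<phi> (x, \<one>)"
      using h x y by (intro hom_mult) auto
    hence "\<phi> (x, y) = y \<otimes> x" using x y u by simp
    with 1 show ?thesis by simp
  qed
  thus ?thesis by (intro group.group_comm_groupI[OF g]) auto
qed

lemma mult_hom:
  assumes "comm_group G"
  shows "(\<lambda>p. fst p \<otimes>\<^bsub>G\<^esub> snd p) \<in> hom (G \<times>\<times> G) G"
proof -
  interpret comm_group G by (rule assms)
  show ?thesis
    by (rule homI) (auto simp: m_ac)
qed

theorem proposition3p6:
  fixes G :: "('a, 'b) monoid_scheme" and P :: "'a set"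
  assumes "preordered_group G P"
  shows "(commutative_object G P \<longleftrightarrow> comm_group G) \<and> (in_ComMon G P \<longleftrightarrow> comm_group G)"
proof -
  have g: "group G" and PG: "P \<subseteq> carrier G" and P1: "\<one>\<^bsub>G\<^esub> \<in> P"
    and Pm: "\<forall>p\<in>P. \<forall>q\<in>P. p \<otimes>\<^bsub>G\<^esub> q \<in> P"
    using assms unfolding preordered_group_def by auto
  interpret group G by (rule g)
  have A: "commutative_object G P \<Longrightarrow> comm_group G"
    unfolding commutative_object_def preord_hom_def using key[OF g] by blast
  have B: "in_ComMon G P \<Longrightarrow> comm_group G"
  proof -
    assume "in_ComMon G P"
    then obtain m e where ic: "internal_comm_monoid G P m e" unfolding in_ComMon_def by blast
    hence mh: "m \<in> hom (G \<times>\<times> G) G" and eh: "e \<in> hom unit_grp G"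
      and un: "\<forall>x\<in>carrier G. m (e (), x) = x \<and> m (x, e ()) = x"
      unfolding internal_comm_monoid_def preord_hom_def by auto
    have ec: "e () \<in> carrier G" using eh unfolding hom_def unit_grp_def by auto
    have "e (() \<otimes>\<^bsub>unit_grp\<^esub> ()) = e () \<otimes>\<^bsub>G\<^esub> e ()"
      using eh unfolding hom_def unit_grp_def by auto
    hence "e () \<otimes>\<^bsub>G\<^esub> e () = e ()" by (simp add: unit_grp_def)
    hence e1: "e () = \<one>\<^bsub>G\<^esub>" using ec by (metis l_cancel r_one one_closed)
    show ?thesis using key[OF g mh] un e1 by simp
  qed
  have C: "comm_group G \<Longrightarrow> commutative_object G P"
  proof -
    assume cg: "comm_group G"
    show ?thesis unfolding commutative_object_def preord_hom_def
      apply (rule bexI[of _ "\<lambda>p. fst p \<otimes>\<^bsub>G\<^esub> snd p"])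
      using mult_hom[OF cg] Pm by auto
  qed
  have D: "comm_group G \<Longrightarrow> in_ComMon G P"
  proof -
    assume cg: "comm_group G"
    interpret c: comm_group G by (rule cg)
    have "internal_comm_monoid G P (\<lambda>p. fst p \<otimes>\<^bsub>G\<^esub> snd p) (\<lambda>_. \<one>\<^bsub>G\<^esub>)"
      unfolding internal_comm_monoid_def preord_hom_def
      using mult_hom[OF cg] Pm P1
      by (auto simp: hom_def unit_grp_def m_assoc c.m_comm)
    thus ?thesis unfolding in_ComMon_def by blast
  qed
  show ?thesis using A B C D by blast
qed

end
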